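(* Let $k\ge2$ and let $\mathcal C_2$ be the binary $(2k+1,k)$ code with generator matrix $G_c=(e_1\ \ e_1\ \ e_1+e_2\ \ e_2\ \ e_2+e_3\ \ e_3\ \cdots\ e_{k-1}+e_k\ \ e_k\ \ e_k)$. Then $\mathcal C_2$ has the Easy Repair Property.
   Context: $e_i$ denotes the $i$-th standard unit vector of $\mathbb F_2^k$. Let $g_1,\dots,g_{2k+1}$ be the columns of $G_c$; nodes are the coordinates of codewords $c=uG_c$. An erasure pattern is a set $S^e$ of erased nodes; the others are live. It is correctable if no two distinct codewords coincide on all live positions. A node $c_i$ is related to distinct nodes $c_{j_1},\dots,c_{j_\gamma}$ (all different from $c_i$) if $g_i=g_{j_1}+\dots+g_{j_\gamma}$. An erased node allows for easy repair if it is related to $\gamma\le2$ live nodes. An erasure pattern allows for easy repair if all erased nodes can be recovered by a sequence of easy repairs, where after each step the recovered node is regarded as live. A code has the Easy Repair Property if every correctable erasure pattern allows for easy repair. *)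

theory Defs
  imports Main "HOL-Library.Z2"
begin

text \<open>A binary linear code of length n and dimension k is given by its generator
  matrix, represented column-wise: g i is the i-th column (i \<in> {1..n}),
  and g i r is its r-th entry (r \<in> {1..k}).  Messages are u :: nat \<Rightarrow> bit
  (only the entries u 1, ..., u k matter); the codeword c = uG has i-th
  coordinate (node) c_i = sum over r of u r * g i r.\<close>

definition codeword :: "nat \<Rightarrow> (nat \<Rightarrow> nat \<Rightarrow> bit) \<Rightarrow> (nat \<Rightarrow> bit) \<Rightarrow> nat \<Rightarrow> bit" where
  "codeword k g u i = (\<Sum>r\<in>{1..k}. u r * g i r)"

definition correctable :: "nat \<Rightarrow> nat \<Rightarrow> (nat \<Rightarrow> nat \<Rightarrow> bit) \<Rightarrow> nat set \<Rightarrow> bool" where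
  "correctable n k g S \<longleftrightarrow>
     (\<forall>u v. (\<forall>i\<in>{1..n} - S. codeword k g u i = codeword k g v i)
            \<longrightarrow> (\<forall>i\<in>{1..n}. codeword k g u i = codeword k g v i))"

definition related :: "nat \<Rightarrow> (nat \<Rightarrow> nat \<Rightarrow> bit) \<Rightarrow> nat \<Rightarrow> nat set \<Rightarrow> bool" where
  "related k g i J \<longleftrightarrow> finite J \<and> J \<noteq> {} \<and> i \<notin> J \<and>
     (\<forall>r\<in>{1..k}. g i r = (\<Sum>j\<in>J. g j r))"

definition easy_node_repair :: "nat \<Rightarrow> (nat \<Rightarrow> nat \<Rightarrow> bit) \<Rightarrow> nat set \<Rightarrow> nat \<Rightarrow> bool" where
  "easy_node_repair k g L i \<longleftrightarrow> (\<exists>J. J \<subseteq> L \<and> card J \<le> 2 \<and> related k g i J)"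

inductive easy_repair :: "nat \<Rightarrow> nat \<Rightarrow> (nat \<Rightarrow> nat \<Rightarrow> bit) \<Rightarrow> nat set \<Rightarrow> bool"
  for n k g where
  empty: "easy_repair n k g {}"
| step: "\<lbrakk>i \<in> S; easy_node_repair k g ({1..n} - S) i; easy_repair n k g (S - {i})\<rbrakk>
         \<Longrightarrow> easy_repair n k g S"

definition easy_repair_property :: "nat \<Rightarrow> nat \<Rightarrow> (nat \<Rightarrow> nat \<Rightarrow> bit) \<Rightarrow> bool" where
  "easy_repair_property n k g \<longleftrightarrow>
     (\<forall>S. S \<subseteq> {1..n} \<and> correctable n k g S \<longrightarrow> easy_repair n k g S)"

definition unitv :: "nat \<Rightarrow> nat \<Rightarrow> bit" where
  "unitv m r = (if r = m then 1 else 0)"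

text \<open>Columns of G_c = (e_1, e_1, e_1+e_2, e_2, e_2+e_3, e_3, ..., e_(k-1)+e_k, e_k, e_k),
  length 2k+1: g_1 = e_1, g_(2m) = e_m (1 \<le> m \<le> k), g_(2m+1) = e_m + e_(m+1) (1 \<le> m < k),
  g_(2k+1) = e_k.\<close>

definition Gc :: "nat \<Rightarrow> nat \<Rightarrow> nat \<Rightarrow> bit" where
  "Gc k i = (if i = 1 then unitv 1
             else if i = 2 * k + 1 then unitv k
             else if even i then unitv (i div 2)
             else (\<lambda>r. unitv (i div 2) r + unitv (i div 2 + 1) r))"

end

theory Submission
  imports Defs
begin

lemma bit_self_add [simp]: "(x::bit) + x = 0"
  by (cases x) simp_all

definition rimv :: "nat \<Rightarrow> nat \<Rightarrow> bit" where
  "rimv m = (\<lambda>r. unitv m r + unitv (m + 1) r)"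

lemma rel_a: "unitv m r = rimv m r + unitv (m+1) r"
  unfolding rimv_def by (simp only: add.assoc bit_self_add add_0_right)
lemma rel_b: "unitv (m+1) r = rimv m r + unitv m r"
  unfolding rimv_def by (simp only: add.commute[of "unitv m r"] add.assoc bit_self_add add_0_right)

lemma Gc_spoke: "1 \<le> m \<Longrightarrow> m \<le> k \<Longrightarrow> Gc k (2*m) = unitv m"
  unfolding Gc_def by auto

lemma Gc_rim: "1 \<le> m \<Longrightarrow> m < k \<Longrightarrow> Gc k (2*m+1) = rimv m"
  unfolding Gc_def rimv_def by auto

lemma col_cases:
  assumes "i \<in> {1..2*k+1}" "k \<ge> 2"
  shows "(\<exists>m\<in>{1..k}. Gc k i = unitv m) \<or> (\<exists>m. 1 \<le> m \<and> m < k \<and> Gc k i = rimv m)"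
proof -
  consider "i = 1" | "i = 2*k+1" | "i \<noteq> 1" "i \<noteq> 2*k+1" "even i" | "i \<noteq> 1" "i \<noteq> 2*k+1" "odd i" by blast
  then show ?thesis
  proof cases
    case 1 then show ?thesis using assms by (auto simp: Gc_def)
  next
    case 2 then show ?thesis using assms by (auto simp: Gc_def)
  next
    case 3
    then obtain m where m: "i = 2*m" by (auto elim: evenE)
    then show ?thesis using assms 3 by (intro disjI1 bexI[of _ m]) (auto simp: Gc_spoke)
  next
    case 4
    then obtain m where m: "i = 2*m+1" by (auto elim: oddE)
    have "1 \<le> m" "m < k" using m assms 4 by auto
    then show ?thesis using m Gc_rim[of m k] by auto
  qed
qed

lemma cw_unit: "m \<in> {1..k} \<Longrightarrow> (\<Sum>r\<in>{1..k}. u r * unitv m r) = u m"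
proof -
  assume m: "m \<in> {1..k}"
  have "(\<Sum>r\<in>{1..k}. u r * unitv m r) = (\<Sum>r\<in>{1..k}. if r = m then u m else 0)"
    by (rule sum.cong) (auto simp: unitv_def)
  also have "\<dots> = u m" using m by (subst sum.delta) auto
  finally show ?thesis .
qed

lemma cw_unit': "Gc k i = unitv m \<Longrightarrow> m \<in> {1..k} \<Longrightarrow> codeword k (Gc k) u i = u m"
  unfolding codeword_def by (simp only: cw_unit)

lemma cw_rim': "Gc k i = rimv m \<Longrightarrow> 1 \<le> m \<Longrightarrow> m < k \<Longrightarrow> codeword k (Gc k) u i = u m + u (m+1)"
proof -
  assume a: "Gc k i = rimv m" "1 \<le> m" "m < k"
  have "codeword k (Gc k) u i = (\<Sum>r\<in>{1..k}. u r * unitv m r + u r * unitv (m+1) r)"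
    unfolding codeword_def a(1) rimv_def by (simp only: distrib_left)
  also have "\<dots> = (\<Sum>r\<in>{1..k}. u r * unitv m r) + (\<Sum>r\<in>{1..k}. u r * unitv (m+1) r)"
    by (rule sum.distrib)
  also have "\<dots> = u m + u (m+1)" using a cw_unit[of m k u] cw_unit[of "m+1" k u] by simp
  finally show ?thesis .
qed

lemma cw_zero: "codeword k g (\<lambda>_. 0) i = 0"
  unfolding codeword_def by simp

lemma unit_ne_rim: "unitv (m+1) \<noteq> rimv m"
proof
  assume "unitv (m+1) = rimv m"
  then have "unitv (m+1) m = rimv m m" by simp
  then show False by (simp add: unitv_def rimv_def)
qed

lemma unit_ne_rim2: "unitv m \<noteq> rimv m"
proof
  assume "unitv m = rimv m"
  then have "unitv m (m+1) = rimv m (m+1)" by simp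
  then show False by (simp add: unitv_def rimv_def)
qed

lemma unit_ne: "m \<noteq> m' \<Longrightarrow> unitv m \<noteq> unitv m'"
proof
  assume "m \<noteq> m'" "unitv m = unitv m'"
  then have "unitv m m = unitv m' m" by simp
  then show False using \<open>m \<noteq> m'\<close> by (simp add: unitv_def)
qed

lemma related2:
  assumes "i \<notin> {p,q}" "p \<noteq> q" "\<forall>r. Gc k i r = Gc k p r + Gc k q r"
  shows "related k (Gc k) i {p,q}"
  using assms unfolding related_def by auto

lemma related1:
  assumes "i \<noteq> p" "Gc k i = Gc k p"
  shows "related k (Gc k) i {p}"
  using assms unfolding related_def by auto

lemma exists_repair:
  assumes k2: "k \<ge> 2" and Ssub: "S \<subseteq> {1..2*k+1}" and cor: "correctable (2*k+1) k (Gc k) S"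
    and ne: "S \<noteq> {}"
  shows "\<exists>i\<in>S. easy_node_repair k (Gc k) ({1..2*k+1} - S) i"
proof -
  define L where "L = {1..2*k+1} - S"
  define ls where "ls m \<longleftrightarrow> (\<exists>i\<in>L. Gc k i = unitv m)" for m
  define lr where "lr m \<longleftrightarrow> (\<exists>i\<in>L. Gc k i = rimv m)" for m
  define R where "R = {m\<in>{1..k}. \<not> ls m}"
  show ?thesis
  proof (cases "R = {}")
    case False
    have "\<exists>m. 1 \<le> m \<and> m < k \<and> lr m \<and> (m \<in> R) \<noteq> (m+1 \<in> R)"
    proof (rule ccontr)
      assume H: "\<not> ?thesis"
      define u where "u r = (if r \<in> R then 1 else (0::bit))" for r
      have live: "\<forall>i\<in>{1..2*k+1} - S. codeword k (Gc k) u i = codeword k (Gc k) (\<lambda>_. 0) i"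
      proof
        fix i assume iL: "i \<in> {1..2*k+1} - S"
        from col_cases[OF _ k2, of i] iL
        consider m where "m\<in>{1..k}" "Gc k i = unitv m" | m where "1 \<le> m" "m < k" "Gc k i = rimv m"
          by auto
        then show "codeword k (Gc k) u i = codeword k (Gc k) (\<lambda>_. 0) i"
        proof cases
          case 1
          then have "ls m" using iL unfolding ls_def L_def by auto
          then have "m \<notin> R" unfolding R_def by auto
          then show ?thesis using 1 by (simp add: cw_unit' cw_zero u_def)
        next
          case 2
          then have "lr m" using iL unfolding lr_def L_def by auto
          then have "(m \<in> R) = (m+1 \<in> R)" using H 2 by auto
          then show ?thesis using 2 by (simp add: cw_rim' cw_zero u_def)
        qed
      qed
      from False obtain m0 where m0: "m0 \<in> R" by auto
      then have m0k: "m0 \<in> {1..k}" unfolding R_def by auto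
      have "codeword k (Gc k) u (2*m0) = codeword k (Gc k) (\<lambda>_. 0) (2*m0)"
      proof -
        have "\<forall>i\<in>{1..2*k+1}. codeword k (Gc k) u i = codeword k (Gc k) (\<lambda>_. 0) i"
          using cor live unfolding correctable_def by blast
        moreover have "2*m0 \<in> {1..2*k+1}" using m0k by auto
        ultimately show ?thesis by blast
      qed
      moreover have "codeword k (Gc k) u (2*m0) = 1"
        using m0 m0k by (simp add: cw_unit' Gc_spoke u_def)
      ultimately show False by (simp add: cw_zero)
    qed
    then obtain m where m: "1 \<le> m" "m < k" "lr m" "(m \<in> R) \<noteq> (m+1 \<in> R)" by blast
    from m(3) obtain q where q: "q \<in> L" "Gc k q = rimv m" unfolding lr_def by auto
    show ?thesis
    proof (cases "m \<in> R")
      case True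
      then have "m+1 \<notin> R" using m by auto
      then have "ls (m+1)" unfolding R_def using m by auto
      then obtain p where p: "p \<in> L" "Gc k p = unitv (m+1)" unfolding ls_def by auto
      have iS: "2*m \<in> S"
        using True m Gc_spoke[of m k] unfolding R_def ls_def L_def by auto
      have pq: "p \<noteq> q" using p q unit_ne_rim by metis
      have g: "Gc k (2*m) = unitv m" using m Gc_spoke[of m k] by simp
      have "related k (Gc k) (2*m) {q,p}"
        apply (rule related2)
        using iS p q pq apply (auto simp: L_def)[2]
        using g q p rel_a[of m] by metis
      then show ?thesis using iS p q pq unfolding easy_node_repair_def L_def
        by (intro bexI[of _ "2*m"] exI[of _ "{q,p}"]) auto
    next
      case False
      then have R1: "m+1 \<in> R" using m by auto
      have "ls m" using False unfolding R_def using m by auto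
      then obtain p where p: "p \<in> L" "Gc k p = unitv m" unfolding ls_def by auto
      have iS: "2*(m+1) \<in> S"
        using R1 m Gc_spoke[of "m+1" k] unfolding R_def ls_def L_def by auto
      have pq: "p \<noteq> q" using p q unit_ne_rim2 by metis
      have g: "Gc k (2*(m+1)) = unitv (m+1)" using m Gc_spoke[of "m+1" k] by simp
      have "related k (Gc k) (2*(m+1)) {q,p}"
        apply (rule related2)
        using iS p q pq apply (auto simp: L_def)[2]
        using g q p rel_b[of m] by metis
      then show ?thesis using iS p q pq unfolding easy_node_repair_def L_def
        by (intro bexI[of _ "2*(m+1)"] exI[of _ "{q,p}"]) auto
    qed
  next
    case True
    then have lsall: "ls m" if "m \<in> {1..k}" for m using that unfolding R_def by auto
    from ne obtain i where iS: "i \<in> S" by auto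
    have "i \<in> {1..2*k+1}" using iS Ssub by blast
    from col_cases[OF this k2]
    consider m where "m\<in>{1..k}" "Gc k i = unitv m" | m where "1 \<le> m" "m < k" "Gc k i = rimv m"
      by auto
    then show ?thesis
    proof cases
      case 1
      then obtain p where p: "p \<in> L" "Gc k p = unitv m" using lsall unfolding ls_def by auto
      have "related k (Gc k) i {p}" apply (rule related1) using p iS 1 by (auto simp: L_def)
      then show ?thesis using iS p unfolding easy_node_repair_def L_def
        by (intro bexI[of _ i] exI[of _ "{p}"]) auto
    next
      case 2
      obtain p where p: "p \<in> L" "Gc k p = unitv m" using lsall[of m] 2 unfolding ls_def by auto
      obtain q where q: "q \<in> L" "Gc k q = unitv (m+1)" using lsall[of "m+1"] 2 unfolding ls_def by auto
      have pq: "p \<noteq> q" using p q unit_ne[of m "m+1"] by auto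
      have "related k (Gc k) i {p,q}"
        apply (rule related2)
        using iS p q pq apply (auto simp: L_def)[2]
        using 2 p q unfolding rimv_def by metis
      then show ?thesis using iS p q pq unfolding easy_node_repair_def L_def
        by (intro bexI[of _ i] exI[of _ "{p,q}"]) auto
    qed
  qed
qed

lemma correctable_mono: "correctable n k g S \<Longrightarrow> S' \<subseteq> S \<Longrightarrow> correctable n k g S'"
  unfolding correctable_def by blast

lemma main:
  assumes "k \<ge> 2"
  shows "S \<subseteq> {1..2*k+1} \<Longrightarrow> correctable (2*k+1) k (Gc k) S \<Longrightarrow> easy_repair (2*k+1) k (Gc k) S"
proof (induction "card S" arbitrary: S rule: less_induct)
  case less
  show ?case
  proof (cases "S = {}")
    case True then show ?thesis by (simp add: easy_repair.empty)
  next
    case False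
    from exists_repair[OF assms less.prems False] obtain i where
      i: "i \<in> S" "easy_node_repair k (Gc k) ({1..2*k+1} - S) i" by blast
    have fin: "finite S" using less.prems(1) finite_subset by blast
    have "easy_repair (2*k+1) k (Gc k) (S - {i})"
    proof (rule less.hyps)
      show "card (S - {i}) < card S" by (rule card_Diff1_less[OF fin i(1)])
      show "S - {i} \<subseteq> {1..2*k+1}" using less.prems(1) by blast
      show "correctable (2*k+1) k (Gc k) (S - {i})"
        by (rule correctable_mono[OF less.prems(2)]) blast
    qed
    then show ?thesis using i easy_repair.step by blast
  qed
qed

theorem theorem4p5:
  fixes k :: nat
  assumes "k \<ge> 2"
  shows "easy_repair_property (2 * k + 1) k (Gc k)"
  unfolding easy_repair_property_def using main[OF assms] by blast

end
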